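(* Let $r\in\mathbb{Z}$, $r\neq1$, and $A_r=\left(\frac{1+x(r-1)}{1-x};\ \frac{1}{(1-x)^2},\ \frac{x}{1-x}\right)$. Then every element of the cyclic subgroup $\{A_r^p:p\in\mathbb{Z}\}$ of the group of almost Riordan arrays of first order is a pseudo-involution.
   Context: All matrices are infinite lower-triangular with rows and columns indexed by $n,k\ge0$ and integer entries. $[x^n]h(x)$ denotes the coefficient of $x^n$ in $h$. An almost Riordan array of first order is a triple $(a;g,f)$ of formal power series with $a_0=1$, $g_0=1$, $f_0=0$, $f_1=1$; its associated matrix $M$ is given by $M_{0,0}=a_0$, $M_{0,k}=0$ for $k\ge1$, $M_{n,0}=a_n$ for $n\ge1$, and $M_{n,k}=[x^{n-1}]\,g(x)f(x)^{k-1}$ for $n,k\ge1$. These matrices form a group under matrix multiplication. $I$ is the identity matrix and $\bar I$ is the diagonal matrix with diagonal $(1,-1,1,-1,\dots)$. An element with matrix $M$ is a pseudo-involution if $(M\bar I)^2=I$. *)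

theory Defs
  imports "HOL-Computational_Algebra.Formal_Power_Series"
begin

type_synonym imat = "nat \<Rightarrow> nat \<Rightarrow> int"

definition lower_tri :: "imat \<Rightarrow> bool" where
  "lower_tri M \<longleftrightarrow> (\<forall>n k. n < k \<longrightarrow> M n k = 0)"

text \<open>Product of lower-triangular matrices (the sum is finite for such matrices).\<close>
definition mmul :: "imat \<Rightarrow> imat \<Rightarrow> imat" where
  "mmul M N = (\<lambda>n k. \<Sum>j\<le>n. M n j * N j k)"

definition idm :: imat where
  "idm = (\<lambda>n k. if n = k then 1 else 0)"

definition Ibar :: imat where
  "Ibar = (\<lambda>n k. if n = k then (-1) ^ n else 0)"

fun mpow :: "imat \<Rightarrow> nat \<Rightarrow> imat" where
  "mpow M 0 = idm"
| "mpow M (Suc m) = mmul (mpow M m) M"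

definition minv :: "imat \<Rightarrow> imat" where
  "minv M = (THE B. lower_tri B \<and> mmul M B = idm)"

definition mzpow :: "imat \<Rightarrow> int \<Rightarrow> imat" where
  "mzpow M p = (if 0 \<le> p then mpow M (nat p) else mpow (minv M) (nat (- p)))"

definition ar_matrix :: "int fps \<Rightarrow> int fps \<Rightarrow> int fps \<Rightarrow> imat" where
  "ar_matrix a g f = (\<lambda>n k.
     if n = 0 then (if k = 0 then fps_nth a 0 else 0)
     else if k = 0 then fps_nth a n
     else fps_nth (g * f ^ (k - 1)) (n - 1))"

definition pseudo_involution :: "imat \<Rightarrow> bool" where
  "pseudo_involution M \<longleftrightarrow> mmul (mmul M Ibar) (mmul M Ibar) = idm"

definition geom :: "int fps" where
  "geom = Abs_fps (\<lambda>_. 1)"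

definition A_r :: "int \<Rightarrow> imat" where
  "A_r r = ar_matrix ((1 + fps_const (r - 1) * fps_X) * geom) (geom ^ 2) (fps_X * geom)"

end

theory Submission
  imports Defs
begin

lemma pascal_mul:
  fixes p q :: int
  shows "(\<Sum>j\<le>n. (of_nat (n choose j) * p^(n-j)) * (of_nat (j choose k) * q^(j-k)))
         = of_nat (n choose k) * (p+q)^(n-k)"
proof (cases "k \<le> n")
  case False
  then have "\<forall>j\<in>{..n}. (of_nat (n choose j) * p^(n-j)) * (of_nat (j choose k) * q^(j-k)) = (0::int)"
    by auto
  then show ?thesis using False by (simp only: sum.neutral) simp
next
  case True
  define f where "f j = (of_nat (n choose j) * p^(n-j)) * (of_nat (j choose k) * q^(j-k))" for j
  have "(\<Sum>j\<le>n. f j) = (\<Sum>j\<in>{k..n}. f j)"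
    by (rule sum.mono_neutral_right) (auto simp: f_def)
  also have "\<dots> = (\<Sum>i=0..n-k. f (i+k))"
    using sum.shift_bounds_cl_nat_ivl[of f 0 k "n-k"] True by simp
  also have "\<dots> = (\<Sum>i=0..n-k. of_nat (n choose k) * (of_nat ((n-k) choose i) * q^i * p^(n-k-i)))"
  proof (rule sum.cong)
    fix i assume i: "i \<in> {0..n-k}"
    have "(n choose (i+k)) * ((i+k) choose k) = (n choose k) * ((n-k) choose i)"
      using choose_mult[of k "i+k" n] i True by simp
    then have c: "(of_nat (n choose (i+k)) :: int) * of_nat ((i+k) choose k) = of_nat (n choose k) * of_nat ((n-k) choose i)"
      by (metis of_nat_mult)
    have "f (i+k) = (of_nat (n choose (i+k)) * of_nat ((i+k) choose k)) * q^i * p^(n-k-i)"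
      unfolding f_def using i by (simp add: algebra_simps diff_diff_eq)
    also have "\<dots> = of_nat (n choose k) * (of_nat ((n-k) choose i) * q^i * p^(n-k-i))"
      unfolding c by simp
    finally show "f (i+k) = of_nat (n choose k) * (of_nat ((n-k) choose i) * q^i * p^(n-k-i))" .
  qed simp
  also have "\<dots> = of_nat (n choose k) * (q+p)^(n-k)"
    by (simp add: binomial_ring sum_distrib_left atLeast0AtMost)
  finally show ?thesis by (simp add: f_def add.commute)
qed

definition Bm :: "int \<Rightarrow> int \<Rightarrow> imat" where
  "Bm r p = (\<lambda>n k. if k = 0 then (if n = 0 then 1 else r * p^n)
                      else of_nat (n choose k) * p^(n-k))"

lemma Bm_lower: "lower_tri (Bm r p)"
  unfolding lower_tri_def Bm_def by auto

lemma Bm_mul: "mmul (Bm r p) (Bm r q) = Bm r (p+q)"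
proof (intro ext)
  fix n k
  show "mmul (Bm r p) (Bm r q) n k = Bm r (p+q) n k"
  proof (cases "k = 0")
    case True
    show ?thesis
    proof (cases "n = 0")
      case True
      then show ?thesis using \<open>k=0\<close> by (simp add: mmul_def Bm_def)
    next
      case False
      have "mmul (Bm r p) (Bm r q) n k = (\<Sum>j\<le>n. r * (of_nat (n choose j) * q^j * p^(n-j)))"
        unfolding mmul_def
        by (rule sum.cong) (use False True in \<open>auto simp: Bm_def\<close>)
      also have "\<dots> = r * (q+p)^n"
        by (simp add: binomial_ring sum_distrib_left)
      finally show ?thesis using False True by (simp add: Bm_def add.commute)
    qed
  next
    case False
    have "mmul (Bm r p) (Bm r q) n k = (\<Sum>j\<le>n. (of_nat (n choose j) * p^(n-j)) * (of_nat (j choose k) * q^(j-k)))"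
      unfolding mmul_def
      by (rule sum.cong) (use False in \<open>auto simp: Bm_def\<close>)
    also have "\<dots> = of_nat (n choose k) * (p+q)^(n-k)" by (rule pascal_mul)
    finally show ?thesis using False by (simp add: Bm_def)
  qed
qed

lemma Bm_0: "Bm r 0 = idm"
  by (intro ext) (auto simp: Bm_def idm_def)

lemma mmul_assoc:
  assumes "lower_tri Y"
  shows "mmul (mmul X Y) Z = mmul X (mmul Y Z)"
proof (intro ext)
  fix n k
  have "mmul (mmul X Y) Z n k = (\<Sum>j\<le>n. \<Sum>i\<le>n. X n i * Y i j * Z j k)"
    by (simp add: mmul_def sum_distrib_right)
  also have "\<dots> = (\<Sum>i\<le>n. \<Sum>j\<le>n. X n i * Y i j * Z j k)"
    by (rule sum.swap)
  also have "\<dots> = (\<Sum>i\<le>n. \<Sum>j\<le>i. X n i * Y i j * Z j k)"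
  proof (rule sum.cong)
    fix i assume "i \<in> {..n}"
    then show "(\<Sum>j\<le>n. X n i * Y i j * Z j k) = (\<Sum>j\<le>i. X n i * Y i j * Z j k)"
      by (intro sum.mono_neutral_right) (use assms in \<open>auto simp: lower_tri_def\<close>)
  qed simp
  also have "\<dots> = mmul X (mmul Y Z) n k"
    by (simp add: mmul_def sum_distrib_left mult.assoc)
  finally show "mmul (mmul X Y) Z n k = mmul X (mmul Y Z) n k" .
qed

lemma mmul_idm_left: "mmul idm Z = Z"
proof (intro ext)
  fix n k
  have "mmul idm Z n k = (\<Sum>j\<le>n. if n = j then Z n k else 0)"
    unfolding mmul_def idm_def by (rule sum.cong) auto
  then show "mmul idm Z n k = Z n k" by simp
qed

lemma mmul_diag:
  assumes "lower_tri Z"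
  shows "mmul Z (\<lambda>n k. if n = k then d n else 0) = (\<lambda>n k. Z n k * d k)"
proof (intro ext)
  fix n k
  have "mmul Z (\<lambda>n k. if n = k then d n else 0) n k = (\<Sum>j\<le>n. if j = k then Z n k * d k else 0)"
    unfolding mmul_def by (rule sum.cong) auto
  also have "\<dots> = Z n k * d k"
    using assms by (auto simp: lower_tri_def)
  finally show "mmul Z (\<lambda>n k. if n = k then d n else 0) n k = Z n k * d k" .
qed

lemma mmul_idm_right: "lower_tri Z \<Longrightarrow> mmul Z idm = Z"
  using mmul_diag[of Z "\<lambda>_. 1"] unfolding idm_def by simp

lemma geom_nth: "fps_nth geom n = 1"
  by (simp add: geom_def)

lemma geom_sum: "(\<Sum>i=0..m. of_nat ((m - i + s) choose s) :: int) = of_nat ((m + s + 1) choose (s+1))"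
proof (induction m)
  case 0
  then show ?case by simp
next
  case (Suc m)
  have "(\<Sum>i=0..Suc m. of_nat ((Suc m - i + s) choose s) :: int)
        = of_nat ((Suc m + s) choose s) + (\<Sum>i=0..m. of_nat ((m - i + s) choose s))"
    by (subst sum.atLeast0_atMost_Suc_shift) simp
  also have "\<dots> = of_nat ((Suc m + s) choose s) + of_nat ((m + s + 1) choose (s+1))"
    using Suc by simp
  also have "\<dots> = of_nat ((Suc m + s + 1) choose (s+1))"
  proof -
    have e1: "Suc m + s + 1 = Suc (m+s+1)" "Suc m + s = m+s+1" "s+1 = Suc s" by simp_all
    have "(Suc m + s choose s) + (m + s + 1 choose (s+1)) = (Suc m + s + 1 choose (s+1))"
      using binomial_Suc_Suc[of "m+s+1" s] by (simp del: binomial_Suc_Suc)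
    then show ?thesis by (metis of_nat_add)
  qed
  finally show ?case .
qed

lemma geom_pow: "fps_nth (geom ^ Suc s) m = of_nat ((m + s) choose s)"
proof (induction s arbitrary: m)
  case 0
  then show ?case by (simp add: geom_nth)
next
  case (Suc s)
  have "fps_nth (geom ^ Suc (Suc s)) m = (\<Sum>i=0..m. fps_nth geom i * fps_nth (geom ^ Suc s) (m - i))"
    by (subst power_Suc) (rule fps_mult_nth)
  also have "\<dots> = (\<Sum>i=0..m. of_nat ((m - i + s) choose s))"
    by (rule sum.cong) (simp_all only: geom_nth Suc mult_1)
  also have "\<dots> = of_nat ((m + Suc s) choose Suc s)"
    using geom_sum[of m s] by simp
  finally show ?case .
qed

lemma A_r_Bm: "A_r r = Bm r 1"
proof (intro ext)
  fix n k
  have a: "fps_nth ((1 + fps_const (r - 1) * fps_X) * geom) n = (if n = 0 then 1 else r)"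
  proof -
    have "((1 + fps_const (r - 1) * fps_X) * geom) = geom + fps_const (r-1) * (fps_X * geom)"
      by (simp add: algebra_simps)
    moreover have "fps_nth (fps_X * geom) n = (if n = 0 then 0 else 1)"
      using fps_X_power_mult_nth[of 1 geom n] by (simp add: geom_nth)
    ultimately show ?thesis by (simp add: geom_nth)
  qed
  have g: "fps_nth (geom ^ 2 * (fps_X * geom) ^ (k - 1)) (n - 1) = of_nat (n choose k)"
    if "k \<noteq> 0" "n \<noteq> 0"
  proof -
    have "geom ^ 2 * (fps_X * geom) ^ (k - 1) = fps_X ^ (k-1) * geom ^ Suc k"
    proof -
      have e: "2 + (k - 1) = Suc k" using that by simp
      have "geom ^ 2 * (fps_X * geom) ^ (k - 1) = fps_X ^ (k-1) * (geom ^ 2 * geom ^ (k - 1))"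
        by (simp only: power_mult_distrib mult_ac)
      also have "geom ^ 2 * geom ^ (k - 1) = geom ^ Suc k"
        by (simp only: power_add[symmetric] e)
      finally show ?thesis .
    qed
    then have "fps_nth (geom ^ 2 * (fps_X * geom) ^ (k - 1)) (n - 1) = (if n - 1 < k - 1 then 0 else fps_nth (geom ^ Suc k) (n - 1 - (k - 1)))"
      by (simp add: fps_X_power_mult_nth)
    also have "\<dots> = of_nat (n choose k)"
    proof (cases "n < k")
      case True
      then have "n - 1 < k - 1" using that by simp
      then show ?thesis using True by simp
    next
      case False
      then have e: "n - 1 - (k - 1) + k = n" using that by simp
      show ?thesis using False that geom_pow[of k "n - 1 - (k - 1)"] unfolding e by simp
    qed
    finally show ?thesis .
  qed
  show "A_r r n k = Bm r 1 n k"
  proof -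
    have A: "A_r r n k = (if n = 0 then (if k = 0 then fps_nth ((1 + fps_const (r - 1) * fps_X) * geom) 0 else 0)
       else if k = 0 then fps_nth ((1 + fps_const (r - 1) * fps_X) * geom) n
       else fps_nth (geom ^ 2 * (fps_X * geom) ^ (k - 1)) (n - 1))"
      unfolding A_r_def ar_matrix_def by (rule refl)
    show ?thesis
    proof (cases "n = 0")
      case True
      then show ?thesis unfolding A using a True by (simp add: Bm_def)
    next
      case n: False
      show ?thesis
      proof (cases "k = 0")
        case True
        have a': "fps_nth ((1 + fps_const (r - 1) * fps_X) * geom) n = r"
          using a unfolding if_not_P[OF n] .
        show ?thesis unfolding A Bm_def using n True
          by (simp only: if_True if_False a' power_one mult_1_right simp_thms)
      next
        case False
        then show ?thesis unfolding A using n g[OF False n] by (simp add: Bm_def)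
      qed
    qed
  qed
qed

lemma minv_A: "minv (Bm r 1) = Bm r (-1)"
proof -
  have m1: "mmul (Bm r 1) (Bm r (-1)) = idm"
    using Bm_mul[of r 1 "-1"] Bm_0[of r] by simp
  have m2: "mmul (Bm r (-1)) (Bm r 1) = idm"
    using Bm_mul[of r "-1" 1] Bm_0[of r] by simp
  have ex: "lower_tri (Bm r (-1)) \<and> mmul (Bm r 1) (Bm r (-1)) = idm"
    using Bm_lower m1 by blast
  have un: "C = Bm r (-1)" if "lower_tri C \<and> mmul (Bm r 1) C = idm" for C
  proof -
    have "C = mmul idm C" by (rule mmul_idm_left[symmetric])
    also have "\<dots> = mmul (mmul (Bm r (-1)) (Bm r 1)) C" by (simp only: m2)
    also have "\<dots> = mmul (Bm r (-1)) (mmul (Bm r 1) C)"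
      by (rule mmul_assoc[OF Bm_lower])
    also have "\<dots> = mmul (Bm r (-1)) idm" using that by simp
    also have "\<dots> = Bm r (-1)" by (rule mmul_idm_right[OF Bm_lower])
    finally show ?thesis .
  qed
  show ?thesis unfolding minv_def
    by (rule the_equality) (rule ex, rule un)
qed

lemma mpow_Bm: "mpow (Bm r s) m = Bm r (int m * s)"
  by (induction m) (simp_all add: Bm_0 Bm_mul algebra_simps)

lemma mzpow_A: "mzpow (A_r r) p = Bm r p"
  unfolding mzpow_def A_r_Bm minv_A mpow_Bm by simp

lemma mmul_Ibar: "lower_tri M \<Longrightarrow> mmul M Ibar = (\<lambda>n k. M n k * (-1)^k)"
  using mmul_diag[of M "\<lambda>n. (-1)^n"] unfolding Ibar_def by simp

lemma Bm_neg: "(-1)^j * Bm r p j k * (-1)^k = Bm r (-p) j k"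
proof (cases "k \<le> j")
  case True
  then obtain d where d: "j = k + d" using le_Suc_ex by blast
  have s: "(-1::int)^j * (-1)^k = (-1)^d"
    unfolding d by (simp add: power_add mult.commute mult.left_commute minus_one_mult_self)
  have "(-1)^j * Bm r p j k * (-1)^k = ((-1)^j * (-1)^k) * Bm r p j k" by (simp add: algebra_simps)
  also have "\<dots> = (-1)^d * Bm r p j k" by (simp only: s)
  also have "\<dots> = Bm r (-p) j k"
  proof (cases "k = 0")
    case True
    then show ?thesis unfolding Bm_def using d power_minus[of p d] by (simp add: mult_ac)
  next
    case False
    then show ?thesis unfolding Bm_def using d power_minus[of p d] by (simp add: mult_ac)
  qed
  finally show ?thesis .
next
  case False
  then show ?thesis by (auto simp: Bm_def)
qed

theorem mainTheorem4:
  fixes r :: int and p :: int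
  assumes "r \<noteq> 1"
  shows "pseudo_involution (mzpow (A_r r) p)"
proof -
  have "mmul (mmul (Bm r p) Ibar) (mmul (Bm r p) Ibar) = mmul (Bm r p) (Bm r (-p))"
    unfolding mmul_Ibar[OF Bm_lower]
    by (intro ext) (simp add: mmul_def Bm_neg[symmetric] mult.assoc)
  also have "\<dots> = idm" by (simp add: Bm_mul Bm_0)
  finally show ?thesis unfolding pseudo_involution_def mzpow_A .
qed

end
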